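(* Let $p\in(0,1)$. Consider the number line graph on $\mathbb{Z}$, which has a directed edge $(i,j)$ for all integers $i<j$, with independent edge weights $w(i,j)\sim\mathrm{Bernoulli}(p)$. For $n\ge1$, let $X_n$ be the maximum weight of a directed path from $1$ to $n$, and let $X_n^+=\max(X_n,0)$. Set \[ \beta_{tr}(p)=\Big(\sum_{n\ge1}(1-p)^{\binom{n}{2}}\Big)^{-1}. \] Then $\frac{X_n}{n-1}\to\beta_{tr}(p)$ almost surely, and $\frac{X_n^+}{n-1}\to\beta_{tr}(p)$ in $L^1$, as $n\to\infty$. In particular, $\lim_{n\to\infty}\frac{\mathbb{E}[X_n]}{n-1}=\beta_{tr}(p)$.
   Context: Every edge weight is independently $1$ with probability $p$ and $0$ otherwise. The weight of a directed path is the sum of the weights of its edges. Any directed path from $1$ to $n$ uses only vertices in $\{1,\ldots,n\}$. All $X_n$ are defined on the same probability space, namely that of the weights on the whole number line. $\binom{1}{2}=0$. *)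

theory Defs
  imports "HOL-Probability.Probability"
begin

definition inc_paths :: "int \<Rightarrow> int \<Rightarrow> int list set" where
  "inc_paths a b = {xs. xs \<noteq> [] \<and> hd xs = a \<and> last xs = b \<and> sorted_wrt (<) xs}"

definition path_weight :: "(int \<times> int \<Rightarrow> bool) \<Rightarrow> int list \<Rightarrow> nat" where
  "path_weight W xs = (\<Sum>e\<leftarrow>zip xs (tl xs). of_bool (W e))"

definition max_path_weight :: "(int \<times> int \<Rightarrow> bool) \<Rightarrow> int \<Rightarrow> int \<Rightarrow> nat" where
  "max_path_weight W a b = Max (path_weight W ` inc_paths a b)"

definition beta_tr :: "real \<Rightarrow> real" where
  "beta_tr p = inverse (\<Sum>n. (1 - p) ^ (Suc n choose 2))"

end

theory Submission
  imports Defs "HOL-Probability.Probability"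
begin

lemma pw_Nil[simp]: "path_weight W [] = 0" by (simp add: path_weight_def)
lemma pw_single[simp]: "path_weight W [x] = 0" by (simp add: path_weight_def)
lemma pw_Cons2[simp]: "path_weight W (x#y#zs) = of_bool (W (x,y)) + path_weight W (y#zs)"
  by (simp add: path_weight_def)

lemma pw_snoc: "xs \<noteq> [] \<Longrightarrow> path_weight W (xs @ [u]) = path_weight W xs + of_bool (W (last xs, u))"
proof (induction xs rule: induct_list012)
  case (3 x y zs) then show ?case by simp
qed auto

lemma pw_cong: "sorted_wrt (<) xs \<Longrightarrow> (\<And>v u. v \<in> set xs \<Longrightarrow> u \<in> set xs \<Longrightarrow> v < u \<Longrightarrow> W (v,u) = W' (v,u))
  \<Longrightarrow> path_weight W xs = path_weight W' xs"
proof (induction xs rule: induct_list012)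
  case (3 x y zs)
  have "W (x,y) = W' (x,y)" using 3(4)[of x y] 3(3) by simp
  moreover have "path_weight W (y#zs) = path_weight W' (y#zs)"
    using 3 by (intro 3(2)) auto
  ultimately show ?case by simp
qed auto

lemma sorted_le_last: "sorted xs \<Longrightarrow> x \<in> set xs \<Longrightarrow> xs \<noteq> [] \<Longrightarrow> x \<le> (last xs :: 'a::linorder)"
proof (induction xs)
  case (Cons y ys) then show ?case by (cases ys) auto
qed simp

lemma inc_paths_set:
  assumes "xs \<in> inc_paths a b" shows "set xs \<subseteq> {a..b}" "distinct xs"
proof -
  from assms have ne: "xs \<noteq> []" and h: "hd xs = a" and l: "last xs = b" and s: "sorted_wrt (<) xs"
    by (auto simp: inc_paths_def)
  show "distinct xs" using s by (metis strict_sorted_iff)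
  have "sorted xs" using s by (metis strict_sorted_iff)
  show "set xs \<subseteq> {a..b}"
  proof
    fix x assume x: "x \<in> set xs"
    have "hd xs \<le> x" using \<open>sorted xs\<close> x ne by (cases xs) auto
    moreover have "x \<le> last xs" using \<open>sorted xs\<close> x ne by (rule sorted_le_last)
    ultimately show "x \<in> {a..b}" using h l by auto
  qed
qed

lemma finite_inc_paths: "finite (inc_paths a b)"
proof -
  have "inc_paths a b \<subseteq> {xs. set xs \<subseteq> {a..b} \<and> length xs \<le> card {a..b}}"
  proof
    fix xs assume "xs \<in> inc_paths a b"
    then have "set xs \<subseteq> {a..b}" "distinct xs" using inc_paths_set by auto
    then show "xs \<in> {xs. set xs \<subseteq> {a..b} \<and> length xs \<le> card {a..b}}"
      by (metis (mono_tags) card_mono distinct_card finite_atLeastAtMost_int mem_Collect_eq)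
  qed
  then show ?thesis using finite_lists_length_le[of "{a..b}"] by (rule finite_subset) simp
qed

lemma inc_paths_ne: assumes "a \<le> b" shows "inc_paths a b \<noteq> {}"
proof -
  have "(if a = b then [a] else [a,b]) \<in> inc_paths a b" using assms by (auto simp: inc_paths_def)
  then show ?thesis by blast
qed

lemma mpw_attained: "a \<le> b \<Longrightarrow> \<exists>xs\<in>inc_paths a b. path_weight W xs = max_path_weight W a b"
  unfolding max_path_weight_def using finite_inc_paths inc_paths_ne
  by (metis (no_types, lifting) Max_in finite_imageI image_iff image_is_empty)

lemma mpw_ge: "xs \<in> inc_paths a b \<Longrightarrow> path_weight W xs \<le> max_path_weight W a b"
  unfolding max_path_weight_def using finite_inc_paths by simp

lemma mpw_refl[simp]: "max_path_weight W a a = 0"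
proof -
  obtain xs where xs: "xs \<in> inc_paths a a" "path_weight W xs = max_path_weight W a a"
    using mpw_attained[of a a W] by auto
  then have "set xs \<subseteq> {a}" "distinct xs" "xs \<noteq> []" using inc_paths_set[OF xs(1)] by (auto simp: inc_paths_def)
  then have "xs = [a]"
    by (metis distinct_singleton empty_set insert_subset list.set(2) subset_singleton_iff
        distinct.simps(2) list.exhaust set_empty2 singleton_iff subset_iff list.set_intros(1,2))
  then show ?thesis using xs by simp
qed

lemma mpw_step: assumes "a \<le> v" "v < u"
  shows "max_path_weight W a v + of_bool (W (v,u)) \<le> max_path_weight W a u"
proof -
  obtain xs where xs: "xs \<in> inc_paths a v" "path_weight W xs = max_path_weight W a v"
    using mpw_attained[of a v W] assms by auto
  have "set xs \<subseteq> {a..v}" using inc_paths_set[OF xs(1)] by auto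
  then have "xs @ [u] \<in> inc_paths a u" using xs(1) assms
    by (auto simp: inc_paths_def sorted_wrt_append hd_append)
  then have "path_weight W (xs @ [u]) \<le> max_path_weight W a u" by (rule mpw_ge)
  moreover have "last xs = v" "xs \<noteq> []" using xs(1) by (auto simp: inc_paths_def)
  ultimately show ?thesis using xs(2) pw_snoc[of xs W u] by simp
qed

lemma mpw_last: assumes "a < u"
  shows "\<exists>v. a \<le> v \<and> v < u \<and> max_path_weight W a u = max_path_weight W a v + of_bool (W (v,u))"
proof -
  obtain xs where xs: "xs \<in> inc_paths a u" "path_weight W xs = max_path_weight W a u"
    using mpw_attained[of a u W] assms by auto
  have ne: "xs \<noteq> []" and h: "hd xs = a" and l: "last xs = u" and s: "sorted_wrt (<) xs"
    using xs(1) by (auto simp: inc_paths_def)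
  define ys where "ys = butlast xs"
  have xs_eq: "xs = ys @ [u]" using ne l unfolding ys_def by (metis append_butlast_last_id)
  have ysne: "ys \<noteq> []" using xs_eq h assms by (cases ys) auto
  define v where "v = last ys"
  have "v \<in> set ys" using ysne v_def by simp
  then have vu: "v < u" using s xs_eq by (auto simp: sorted_wrt_append)
  have sys: "sorted_wrt (<) ys" using s xs_eq by (simp add: sorted_wrt_append)
  have hys: "hd ys = a" using h xs_eq ysne by simp
  have ysin: "ys \<in> inc_paths a v" using ysne hys sys v_def by (simp add: inc_paths_def)
  have av: "a \<le> v" using inc_paths_set(1)[OF ysin] \<open>v \<in> set ys\<close> by auto
  have "max_path_weight W a u = path_weight W ys + of_bool (W (v,u))"
    using xs(2) xs_eq pw_snoc[OF ysne, of W u] v_def by simp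
  also have "\<dots> \<le> max_path_weight W a v + of_bool (W (v,u))" using mpw_ge[OF ysin] by simp
  finally have "max_path_weight W a u \<le> max_path_weight W a v + of_bool (W (v,u))" .
  with mpw_step[OF av vu, of W] have "max_path_weight W a u = max_path_weight W a v + of_bool (W (v,u))" by simp
  then show ?thesis using av vu by blast
qed

lemma mpw_local:
  assumes "\<And>v u. a \<le> v \<Longrightarrow> v < u \<Longrightarrow> u \<le> b \<Longrightarrow> W (v,u) = W' (v,u)"
  shows "max_path_weight W a b = max_path_weight W' a b"
proof -
  have "path_weight W xs = path_weight W' xs" if "xs \<in> inc_paths a b" for xs
  proof (rule pw_cong)
    show "sorted_wrt (<) xs" using that by (simp add: inc_paths_def)
    fix v u assume "v \<in> set xs" "u \<in> set xs" "v < u"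
    then show "W (v, u) = W' (v, u)" using inc_paths_set(1)[OF that] by (intro assms) auto
  qed
  then show ?thesis unfolding max_path_weight_def by (metis (mono_tags, lifting) image_cong)
qed

abbreviation "mpw \<equiv> max_path_weight"

lemma int_strong_induct[consumes 1, case_names step]:
  assumes "b \<le> c" "\<And>c. b \<le> c \<Longrightarrow> (\<And>v. b \<le> v \<Longrightarrow> v < c \<Longrightarrow> P v) \<Longrightarrow> P c"
  shows "P (c::int)"
  using assms(1)
proof (induction "nat (c - b)" arbitrary: c rule: less_induct)
  case less
  show ?case by (rule assms(2)[OF less(2)]) (rule less(1), auto)
qed

lemma mpw_mono: "a \<le> v \<Longrightarrow> v \<le> u \<Longrightarrow> mpw W a v \<le> mpw W a u"
  using mpw_step[of a v u W] by (cases "v = u") auto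

lemma mpw_incr: assumes "a < u" shows "mpw W a u \<le> mpw W a (u - 1) + 1"
proof -
  obtain v where v: "a \<le> v" "v < u" "mpw W a u = mpw W a v + of_bool (W (v,u))"
    using mpw_last[OF assms] by blast
  have "mpw W a v \<le> mpw W a (u - 1)" using v by (intro mpw_mono) auto
  then show ?thesis using v by simp
qed

lemma mpw_bound: "a \<le> b \<Longrightarrow> mpw W a b \<le> nat (b - a)"
proof (induction b rule: int_ge_induct)
  case (step i)
  then show ?case using mpw_incr[of a "i+1" W] by simp
qed simp

lemma mpw_superadd: assumes "a \<le> b" "b \<le> c" shows "mpw W a b + mpw W b c \<le> mpw W a c"
  using assms(2)
proof (induction c rule: int_strong_induct[where b=b])
  case (step c)
  show ?case
  proof (cases "c = b")
    case False
    then obtain v where v: "b \<le> v" "v < c" "mpw W b c = mpw W b v + of_bool (W (v,c))"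
      using mpw_last[of b c W] step by auto
    have "mpw W a b + mpw W b v \<le> mpw W a v" using step(2)[OF v(1,2)] .
    moreover have "mpw W a v + of_bool (W (v,c)) \<le> mpw W a c" using v assms by (intro mpw_step) auto
    ultimately show ?thesis using v by simp
  qed simp
qed

lemma mpw_subadd: assumes "a \<le> b" "b \<le> c" shows "mpw W a c \<le> mpw W a b + mpw W b c + 1"
  using assms(2)
proof (induction c rule: int_strong_induct[where b=b])
  case (step c)
  show ?case
  proof (cases "c = b")
    case False
    then obtain v where v: "a \<le> v" "v < c" "mpw W a c = mpw W a v + of_bool (W (v,c))"
      using mpw_last[of a c W] step assms by auto
    show ?thesis
    proof (cases "b \<le> v")
      case True
      have "mpw W a v \<le> mpw W a b + mpw W b v + 1" using step(2)[OF True v(2)] .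
      moreover have "mpw W b v + of_bool (W (v,c)) \<le> mpw W b c" using True v by (intro mpw_step) auto
      ultimately show ?thesis using v by simp
    next
      case False
      then have "mpw W a v \<le> mpw W a b" using v by (intro mpw_mono) auto
      then show ?thesis using v by simp
    qed
  qed simp
qed

definition start :: "(int \<times> int \<Rightarrow> bool) \<Rightarrow> int \<Rightarrow> int \<Rightarrow> bool" where
  "start W a s \<longleftrightarrow> s = a \<or> mpw W a s \<noteq> mpw W a (s - 1)"

definition edgeless :: "(int \<times> int \<Rightarrow> bool) \<Rightarrow> int \<Rightarrow> int \<Rightarrow> bool" where
  "edgeless W s t \<longleftrightarrow> (\<forall>v u. s \<le> v \<longrightarrow> v < u \<longrightarrow> u \<le> t \<longrightarrow> \<not> W (v,u))"

lemma mpw_01: assumes "a < u" shows "mpw W a u = mpw W a (u - 1) + of_bool (start W a u)"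
  using mpw_incr[OF assms, of W] mpw_mono[of a "u-1" u W] assms by (auto simp: start_def)

lemma D1: "a \<le> t \<Longrightarrow> real (mpw W a t) + 1 = (\<Sum>s\<in>{a..t}. of_bool (start W a s))"
proof (induction t rule: int_ge_induct)
  case base then show ?case by (simp add: start_def)
next
  case (step i)
  have "{a..i+1} = insert (i+1) {a..i}" using step(1) by auto
  then have "(\<Sum>s\<in>{a..i+1}. of_bool (start W a s) :: real) = of_bool (start W a (i+1)) + (\<Sum>s\<in>{a..i}. of_bool (start W a s))"
    by simp
  moreover have "a < i + 1" using step(1) by simp
  ultimately show ?case using step(2) mpw_01[of a "i+1" W] by simp
qed

lemma start_ex: "a \<le> t \<Longrightarrow> \<exists>s. a \<le> s \<and> s \<le> t \<and> start W a s \<and> mpw W a s = mpw W a t"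
proof (induction t rule: int_ge_induct)
  case base then show ?case by (auto simp: start_def)
next
  case (step i)
  show ?case
  proof (cases "start W a (i+1)")
    case False
    then have "mpw W a (i+1) = mpw W a i" using mpw_01[of a "i+1" W] step by simp
    then show ?thesis using step by (metis add_increasing2 zero_le_one less_add_one order_less_imp_le order_trans)
  next
    case True
    then show ?thesis using step(1) by (intro exI[of _ "i+1"]) auto
  qed
qed

lemma start_uniq: assumes "a \<le> s" "s < s'" "start W a s'" "mpw W a s = mpw W a s'"
  shows False
proof -
  have "mpw W a s \<le> mpw W a (s'-1)" using assms by (intro mpw_mono) auto
  moreover have "mpw W a (s'-1) \<le> mpw W a s'" using assms by (intro mpw_mono) auto
  moreover have "mpw W a s' \<noteq> mpw W a (s'-1)" using assms(1-3) by (auto simp: start_def)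
  ultimately show False using assms(4) by simp
qed

lemma K: assumes "a \<le> s" "s \<le> t" "start W a s"
  shows "mpw W a t = mpw W a s \<longleftrightarrow> edgeless W s t"
proof
  assume eq: "mpw W a t = mpw W a s"
  show "edgeless W s t" unfolding edgeless_def
  proof (intro allI impI notI)
    fix v u assume vu: "s \<le> v" "v < u" "u \<le> t" "W (v,u)"
    have "mpw W a v + 1 \<le> mpw W a u" using mpw_step[of a v u W] vu assms by simp
    moreover have "mpw W a s \<le> mpw W a v" "mpw W a u \<le> mpw W a t" using vu assms by (auto intro!: mpw_mono)
    ultimately show False using eq by simp
  qed
next
  assume el: "edgeless W s t"
  show "mpw W a t = mpw W a s" using assms(2) el
  proof (induction t rule: int_ge_induct)
    case (step i)
    have el': "edgeless W s i" using step(3) by (auto simp: edgeless_def)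
    have IH: "mpw W a i = mpw W a s" using step(2)[OF el'] .
    obtain v where v: "a \<le> v" "v < i+1" "mpw W a (i+1) = mpw W a v + of_bool (W (v,i+1))"
      using mpw_last[of a "i+1" W] step assms by auto
    have "mpw W a (i+1) \<le> mpw W a s"
    proof (cases "s \<le> v")
      case True
      then have "\<not> W (v, i+1)" using step(3) v by (auto simp: edgeless_def)
      moreover have "mpw W a v \<le> mpw W a i" using v by (intro mpw_mono) auto
      ultimately show ?thesis using v IH by simp
    next
      case False
      then have "s \<noteq> a" using v by auto
      then have "mpw W a (s-1) < mpw W a s" using assms mpw_mono[of a "s-1" s W]
        by (auto simp: start_def)
      moreover have "mpw W a v \<le> mpw W a (s-1)" using v False by (intro mpw_mono) auto
      ultimately show ?thesis using v by simp
    qed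
    moreover have "mpw W a s \<le> mpw W a (i+1)" using step assms by (intro mpw_mono) auto
    ultimately show ?case by simp
  qed simp
qed

lemma D2: assumes "a \<le> t"
  shows "real (nat (t - a + 1)) = (\<Sum>s\<in>{a..t}. \<Sum>t'\<in>{s..t}. of_bool (start W a s \<and> edgeless W s t'))"
proof -
  have "(\<Sum>s\<in>{a..t}. \<Sum>t'\<in>{s..t}. of_bool (start W a s \<and> edgeless W s t') :: real)
      = (\<Sum>s\<in>{a..t}. \<Sum>t'\<in>{a..t}. of_bool (start W a s \<and> s \<le> t' \<and> mpw W a t' = mpw W a s))"
  proof (rule sum.cong[OF refl])
    fix s assume s: "s \<in> {a..t}"
    have "(\<Sum>t'\<in>{a..t}. of_bool (start W a s \<and> s \<le> t' \<and> mpw W a t' = mpw W a s) :: real)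
        = (\<Sum>t'\<in>{s..t}. of_bool (start W a s \<and> s \<le> t' \<and> mpw W a t' = mpw W a s))"
      using s by (intro sum.mono_neutral_right) auto
    also have "\<dots> = (\<Sum>t'\<in>{s..t}. of_bool (start W a s \<and> edgeless W s t'))"
      using s K[of a s _ W] by (intro sum.cong refl) auto
    finally show "(\<Sum>t'\<in>{s..t}. of_bool (start W a s \<and> edgeless W s t') :: real) = (\<Sum>t'\<in>{a..t}. of_bool (start W a s \<and> s \<le> t' \<and> mpw W a t' = mpw W a s))"
      by simp
  qed
  also have "\<dots> = (\<Sum>t'\<in>{a..t}. \<Sum>s\<in>{a..t}. of_bool (start W a s \<and> s \<le> t' \<and> mpw W a t' = mpw W a s))"
    by (rule sum.swap)
  also have "\<dots> = (\<Sum>t'\<in>{a..t}. 1)"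
  proof (rule sum.cong[OF refl])
    fix t' assume t': "t' \<in> {a..t}"
    obtain s0 where s0: "a \<le> s0" "s0 \<le> t'" "start W a s0" "mpw W a s0 = mpw W a t'"
      using start_ex[of a t' W] t' by auto
    have "{s\<in>{a..t}. start W a s \<and> s \<le> t' \<and> mpw W a t' = mpw W a s} = {s0}"
    proof (intro equalityI subsetI)
      fix s assume s: "s \<in> {s\<in>{a..t}. start W a s \<and> s \<le> t' \<and> mpw W a t' = mpw W a s}"
      show "s \<in> {s0}"
      proof (rule ccontr)
        assume "s \<notin> {s0}"
        then have "s < s0 \<or> s0 < s" by auto
        then show False using s s0 start_uniq[of a s s0 W] start_uniq[of a s0 s W] by auto
      qed
    qed (use s0 t' in auto)
    then have "(\<Sum>s\<in>{a..t}. of_bool (start W a s \<and> s \<le> t' \<and> mpw W a t' = mpw W a s) :: real) = card {s0}"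
      by (simp add: Int_def)
    then show "(\<Sum>s\<in>{a..t}. of_bool (start W a s \<and> s \<le> t' \<and> mpw W a t' = mpw W a s) :: real) = 1" by simp
  qed
  also have "\<dots> = real (nat (t - a + 1))" using assms by simp
  finally show ?thesis by simp
qed

definition Ed :: "int \<Rightarrow> int \<Rightarrow> (int \<times> int) set" where
  "Ed a b = {e. a \<le> fst e \<and> fst e < snd e \<and> snd e \<le> b}"

lemma finite_Ed: "finite (Ed a b)"
  by (rule finite_subset[of _ "{a..b} \<times> {a..b}"]) (auto simp: Ed_def)

lemma Ed_valid: "e \<in> Ed a b \<Longrightarrow> fst e < snd e" by (auto simp: Ed_def)

lemma Ed_disj: "b \<le> c \<Longrightarrow> Ed a b \<inter> Ed c d = {}" by (auto simp: Ed_def)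

lemma choose2_Suc: "Suc n choose 2 = (n choose 2) + n"
  by (simp add: numeral_2_eq_2)

lemma card_Ed: "s \<le> t \<Longrightarrow> card (Ed s t) = nat (t - s + 1) choose 2"
proof (induction t rule: int_ge_induct)
  case base
  have "Ed s s = {}" by (auto simp: Ed_def)
  then show ?case by simp
next
  case (step t)
  have eq: "Ed s (t+1) = Ed s t \<union> (\<lambda>v. (v, t+1)) ` {s..t}" by (auto simp: Ed_def image_iff)
  have "card (Ed s (t+1)) = card (Ed s t) + card ((\<lambda>v. (v, t+1)) ` {s..t})"
    unfolding eq by (rule card_Un_disjoint[OF finite_Ed]) (auto simp: Ed_def)
  also have "card ((\<lambda>v. (v, t+1)) ` {s..t}) = nat (t - s + 1)"
    by (subst card_image) (auto simp: inj_on_def)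
  finally have "card (Ed s (t+1)) = (nat (t - s + 1) choose 2) + nat (t - s + 1)" by (simp only: step(2))
  also have "\<dots> = Suc (nat (t - s + 1)) choose 2" by (rule choose2_Suc[symmetric])
  also have "Suc (nat (t - s + 1)) = nat (t + 1 - s + 1)" using step by simp
  finally show ?case .
qed

lemma mpw_dep: assumes "\<And>e. e \<in> Ed a b \<Longrightarrow> W e = W' e" shows "mpw W a b = mpw W' a b"
proof (rule mpw_local)
  fix v u assume "a \<le> v" "v < u" "u \<le> b"
  then show "W (v,u) = W' (v,u)" by (intro assms) (simp add: Ed_def)
qed

lemma start_dep: assumes "\<And>e. e \<in> Ed a s \<Longrightarrow> W e = W' e" shows "start W a s = start W' a s"
proof -
  have "mpw W a s = mpw W' a s" by (rule mpw_dep) (rule assms)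
  moreover have "mpw W a (s-1) = mpw W' a (s-1)" 
  proof (rule mpw_dep)
    fix e assume "e \<in> Ed a (s-1)" then have "e \<in> Ed a s" by (auto simp: Ed_def)
    then show "W e = W' e" by (rule assms)
  qed
  ultimately show ?thesis by (simp add: start_def)
qed

lemma edgeless_dep: assumes "\<And>e. e \<in> Ed s t \<Longrightarrow> W e = W' e" shows "edgeless W s t = edgeless W' s t"
proof -
  have "W (v,u) = W' (v,u)" if "s \<le> v" "v < u" "u \<le> t" for v u
    using that by (intro assms) (simp add: Ed_def)
  then show ?thesis unfolding edgeless_def by blast
qed

lemma sets_PiM_bool_finite:
  assumes "finite F"
  shows "sets (PiM F (\<lambda>_. count_space (UNIV :: bool set))) = Pow (space (PiM F (\<lambda>_. count_space (UNIV :: bool set))))"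
proof (intro equalityI subsetI)
  fix A assume "A \<in> sets (PiM F (\<lambda>_. count_space (UNIV :: bool set)))"
  then show "A \<in> Pow (space (PiM F (\<lambda>_. count_space UNIV)))" using sets.sets_into_space by auto
next
  fix A assume A: "A \<in> Pow (space (PiM F (\<lambda>_. count_space (UNIV :: bool set))))"
  have sp: "space (PiM F (\<lambda>_. count_space (UNIV :: bool set))) = PiE F (\<lambda>_. UNIV)" by (simp add: space_PiM)
  have "finite (PiE F (\<lambda>_. UNIV::bool set))" using assms by (intro finite_PiE) auto
  then have fin: "finite A" using A sp by (auto intro: finite_subset)
  have single: "{x} \<in> sets (PiM F (\<lambda>_. count_space (UNIV :: bool set)))" if "x \<in> A" for x
  proof -
    have "x \<in> PiE F (\<lambda>_. UNIV)" using that A sp by auto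
    then have "{x} = PiE F (\<lambda>e. {x e})" by (auto simp: PiE_iff extensional_def fun_eq_iff)
    then show ?thesis using assms by (auto intro!: sets_PiM_I_finite)
  qed
  have "A = (\<Union>x\<in>A. {x})" by auto
  also have "\<dots> \<in> sets (PiM F (\<lambda>_. count_space (UNIV :: bool set)))"
    using fin single by (intro sets.finite_UN) auto
  finally show "A \<in> sets (PiM F (\<lambda>_. count_space (UNIV :: bool set)))" .
qed

lemma measurable_PiM_bool_finite:
  assumes "finite F" "h \<in> space (PiM F (\<lambda>_. count_space (UNIV :: bool set))) \<rightarrow> space N"
  shows "h \<in> measurable (PiM F (\<lambda>_. count_space (UNIV :: bool set))) N"
  using assms sets_PiM_bool_finite[OF assms(1)] by (auto simp: measurable_def)

locale lpp = prob_space M for M :: "'a measure" +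
  fixes w :: "int \<times> int \<Rightarrow> 'a \<Rightarrow> bool" and p :: real
  assumes p0: "0 < p" and p1: "p < 1"
    and indep: "indep_vars (\<lambda>_. count_space UNIV) w {e. fst e < snd e}"
    and distr_w: "\<And>e. fst e < snd e \<Longrightarrow> distr M (count_space UNIV) (w e) = measure_pmf (bernoulli_pmf p)"
begin

abbreviation "WW \<omega> \<equiv> (\<lambda>e. w e \<omega>)"

lemma rv_w: assumes "fst e < snd e" shows "w e \<in> measurable M (count_space UNIV)"
proof -
  have "\<forall>i\<in>{e. fst e < snd e}. random_variable (count_space UNIV) (w i)"
    using indep unfolding indep_vars_def by (rule conjunct1)
  then show ?thesis using assms by blast
qed

lemma rv_restrict:
  assumes "F \<subseteq> {e. fst e < snd e}"
  shows "(\<lambda>\<omega>. restrict (WW \<omega>) F) \<in> measurable M (PiM F (\<lambda>_. count_space UNIV))"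
  using assms rv_w by (intro measurable_restrict) auto

lemma meas_dep:
  assumes F: "finite F" "F \<subseteq> {e. fst e < snd e}"
    and dep: "\<And>W W'. (\<And>e. e \<in> F \<Longrightarrow> W e = W' e) \<Longrightarrow> g W = g W'"
    and sp: "\<And>x. g x \<in> space N"
  shows "(\<lambda>\<omega>. g (WW \<omega>)) \<in> measurable M N"
proof -
  have h: "g \<in> measurable (PiM F (\<lambda>_. count_space UNIV)) N"
    by (rule measurable_PiM_bool_finite[OF F(1)]) (rule Pi_I, rule sp)
  have m: "(\<lambda>\<omega>. g (restrict (WW \<omega>) F)) \<in> measurable M N"
    by (rule measurable_compose[OF rv_restrict[OF F(2)] h])
  have eq: "g (restrict (WW \<omega>) F) = g (WW \<omega>)" for \<omega>
    by (rule dep) simp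
  show ?thesis using m unfolding eq .
qed

lemma event_dep:
  assumes F: "finite F" "F \<subseteq> {e. fst e < snd e}"
    and dep: "\<And>W W'. (\<And>e. e \<in> F \<Longrightarrow> W e = W' e) \<Longrightarrow> P W = P W'"
  shows "{\<omega>\<in>space M. P (WW \<omega>)} \<in> events"
proof -
  have "(\<lambda>\<omega>. P (WW \<omega>)) \<in> measurable M (count_space UNIV)"
    by (rule meas_dep[OF F], rule dep, assumption, simp)
  from measurable_sets[OF this, of "{True}"] show ?thesis
    by (simp add: vimage_def Int_def conj_commute)
qed

lemma prob_false: assumes "fst e < snd e" shows "prob (w e -` {False} \<inter> space M) = 1 - p"
proof -
  have "prob (w e -` {False} \<inter> space M) = measure (distr M (count_space UNIV) (w e)) {False}"
    by (rule measure_distr[symmetric]) (auto intro: rv_w[OF assms])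
  also have "\<dots> = measure_pmf.prob (bernoulli_pmf p) {False}" using distr_w[OF assms] by simp
  also have "\<dots> = 1 - p" using p0 p1 by (simp add: measure_pmf_single)
  finally show ?thesis .
qed

lemma prob_allfalse:
  assumes F: "finite F" "F \<subseteq> {e. fst e < snd e}"
  shows "prob {\<omega>\<in>space M. \<forall>e\<in>F. \<not> w e \<omega>} = (1 - p) ^ card F"
proof (cases "F = {}")
  case True then show ?thesis by (simp add: prob_space)
next
  case False
  have "{\<omega>\<in>space M. \<forall>e\<in>F. \<not> w e \<omega>} = (\<Inter>e\<in>F. w e -` {False} \<inter> space M)"
    using False by auto
  also have "prob \<dots> = (\<Prod>e\<in>F. prob (w e -` {False} \<inter> space M))"
    by (rule indep_varsD[OF indep False F(1) F(2)]) simp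
  also have "\<dots> = (\<Prod>e\<in>F. 1 - p)" using F(2) by (intro prod.cong refl prob_false) auto
  finally show ?thesis by simp
qed

lemma edgeless_Ed: "edgeless W s t \<longleftrightarrow> (\<forall>e\<in>Ed s t. \<not> W e)"
  unfolding edgeless_def Ed_def by auto

lemma Ed_sub: "Ed a b \<subseteq> {e. fst e < snd e}" by (auto simp: Ed_def)

lemma prob_edgeless: assumes "s \<le> t"
  shows "prob {\<omega>\<in>space M. edgeless (WW \<omega>) s t} = (1 - p) ^ (nat (t - s + 1) choose 2)"
  using prob_allfalse[OF finite_Ed Ed_sub, of s t] card_Ed[OF assms] by (simp add: edgeless_Ed)

lemma indep2:
  assumes A: "finite A" "A \<subseteq> {e. fst e < snd e}" and B: "finite B" "B \<subseteq> {e. fst e < snd e}"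
    and AB: "A \<inter> B = {}"
    and depP: "\<And>W W'. (\<And>e. e \<in> A \<Longrightarrow> W e = W' e) \<Longrightarrow> P W = P W'"
    and depQ: "\<And>W W'. (\<And>e. e \<in> B \<Longrightarrow> W e = W' e) \<Longrightarrow> Q W = Q W'"
  shows "prob {\<omega>\<in>space M. P (WW \<omega>) \<and> Q (WW \<omega>)} = prob {\<omega>\<in>space M. P (WW \<omega>)} * prob {\<omega>\<in>space M. Q (WW \<omega>)}"
proof -
  let ?MA = "PiM A (\<lambda>_. count_space (UNIV::bool set))"
  let ?MB = "PiM B (\<lambda>_. count_space (UNIV::bool set))"
  have iv: "indep_var ?MA (\<lambda>\<omega>. restrict (WW \<omega>) A) ?MB (\<lambda>\<omega>. restrict (WW \<omega>) B)"
    by (rule indep_var_restrict[OF indep AB A(2) B(2)])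
  have sa: "{x\<in>space ?MA. P x} \<in> sets ?MA" using sets_PiM_bool_finite[OF A(1)] by auto
  have sb: "{x\<in>space ?MB. Q x} \<in> sets ?MB" using sets_PiM_bool_finite[OF B(1)] by auto
  have eP: "P (restrict (WW \<omega>) A) = P (WW \<omega>)" for \<omega> by (rule depP) simp
  have eQ: "Q (restrict (WW \<omega>) B) = Q (WW \<omega>)" for \<omega> by (rule depQ) simp
  have spA: "restrict (WW \<omega>) A \<in> space ?MA" for \<omega> by (simp add: space_PiM)
  have spB: "restrict (WW \<omega>) B \<in> space ?MB" for \<omega> by (simp add: space_PiM)
  have "prob ((\<lambda>\<omega>. (restrict (WW \<omega>) A, restrict (WW \<omega>) B)) -` ({x\<in>space ?MA. P x} \<times> {x\<in>space ?MB. Q x}) \<inter> space M)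
     = prob ((\<lambda>\<omega>. restrict (WW \<omega>) A) -` {x\<in>space ?MA. P x} \<inter> space M) * prob ((\<lambda>\<omega>. restrict (WW \<omega>) B) -` {x\<in>space ?MB. Q x} \<inter> space M)"
    by (rule indep_varD[OF iv sa sb])
  moreover have "(\<lambda>\<omega>. (restrict (WW \<omega>) A, restrict (WW \<omega>) B)) -` ({x\<in>space ?MA. P x} \<times> {x\<in>space ?MB. Q x}) \<inter> space M
      = {\<omega>\<in>space M. P (WW \<omega>) \<and> Q (WW \<omega>)}"
    using spA spB eP eQ by auto
  moreover have "(\<lambda>\<omega>. restrict (WW \<omega>) A) -` {x\<in>space ?MA. P x} \<inter> space M = {\<omega>\<in>space M. P (WW \<omega>)}"
    using spA eP by auto
  moreover have "(\<lambda>\<omega>. restrict (WW \<omega>) B) -` {x\<in>space ?MB. Q x} \<inter> space M = {\<omega>\<in>space M. Q (WW \<omega>)}"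
    using spB eQ by auto
  ultimately show ?thesis by simp
qed

lemma int_ofbool:
  assumes "{\<omega>\<in>space M. P \<omega>} \<in> events"
  shows "integrable M (\<lambda>\<omega>. of_bool (P \<omega>) :: real)" "(\<integral>\<omega>. of_bool (P \<omega>) \<partial>M) = prob {\<omega>\<in>space M. P \<omega>}"
proof -
  have eq: "\<And>\<omega>. \<omega> \<in> space M \<Longrightarrow> (of_bool (P \<omega>) :: real) = indicator {\<omega>\<in>space M. P \<omega>} \<omega>"
    by (auto simp: indicator_def)
  have "integrable M (\<lambda>\<omega>. of_bool (P \<omega>) :: real) \<longleftrightarrow> integrable M (indicator {\<omega>\<in>space M. P \<omega>} :: 'a \<Rightarrow> real)"
    by (intro Bochner_Integration.integrable_cong refl) (auto simp: indicator_def)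
  then show "integrable M (\<lambda>\<omega>. of_bool (P \<omega>) :: real)"
    using assms by (simp add: integrable_indicator_iff emeasure_eq_measure)
  have "(\<integral>\<omega>. of_bool (P \<omega>) \<partial>M) = (\<integral>\<omega>. indicator {\<omega>\<in>space M. P \<omega>} \<omega> \<partial>M)"
    by (intro Bochner_Integration.integral_cong refl) (auto simp: indicator_def)
  also have "\<dots> = measure M ({\<omega>\<in>space M. P \<omega>} \<inter> space M)"
    by (rule Bochner_Integration.integral_indicator)
  also have "{\<omega>\<in>space M. P \<omega>} \<inter> space M = {\<omega>\<in>space M. P \<omega>}" by blast
  finally show "(\<integral>\<omega>. of_bool (P \<omega>) \<partial>M) = prob {\<omega>\<in>space M. P \<omega>}" .
qed

lemma start_event: "{\<omega>\<in>space M. start (WW \<omega>) a s} \<in> events"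
  by (rule event_dep[OF finite_Ed Ed_sub]) (rule start_dep, blast)

lemma edgeless_event: "{\<omega>\<in>space M. edgeless (WW \<omega>) s t} \<in> events"
  by (rule event_dep[OF finite_Ed Ed_sub]) (rule edgeless_dep, blast)

lemma both_event: "{\<omega>\<in>space M. start (WW \<omega>) a s \<and> edgeless (WW \<omega>) s t} \<in> events"
proof (rule event_dep[of "Ed a s \<union> Ed s t"])
  show "finite (Ed a s \<union> Ed s t)" by (simp add: finite_Ed)
  show "Ed a s \<union> Ed s t \<subseteq> {e. fst e < snd e}" using Ed_sub by blast
  fix W W' :: "int \<times> int \<Rightarrow> bool" assume h: "\<And>e. e \<in> Ed a s \<union> Ed s t \<Longrightarrow> W e = W' e"
  have "start W a s = start W' a s" by (rule start_dep) (rule h, blast)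
  moreover have "edgeless W s t = edgeless W' s t" by (rule edgeless_dep) (rule h, blast)
  ultimately show "(start W a s \<and> edgeless W s t) = (start W' a s \<and> edgeless W' s t)" by simp
qed

lemma prob_both: assumes "s \<le> t"
  shows "prob {\<omega>\<in>space M. start (WW \<omega>) a s \<and> edgeless (WW \<omega>) s t}
     = prob {\<omega>\<in>space M. start (WW \<omega>) a s} * (1 - p) ^ (nat (t - s + 1) choose 2)"
proof -
  have "prob {\<omega>\<in>space M. start (WW \<omega>) a s \<and> edgeless (WW \<omega>) s t}
     = prob {\<omega>\<in>space M. start (WW \<omega>) a s} * prob {\<omega>\<in>space M. edgeless (WW \<omega>) s t}"
    by (rule indep2[OF finite_Ed Ed_sub finite_Ed Ed_sub Ed_disj[OF order_refl]])
       (rule start_dep, blast, rule edgeless_dep, blast)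
  then show ?thesis using prob_edgeless[OF assms] by simp
qed

end

lemma sum_reindex_up: "(\<Sum>t'\<in>{s..t}. g (nat (t' - s + 1))) = (\<Sum>j<nat (t - s + 1). g (Suc j))"
proof -
  have eqs: "{s..t} = (\<lambda>j. s + int j) ` {..<nat (t - s + 1)}"
  proof (intro equalityI subsetI)
    fix x assume x: "x \<in> {s..t}"
    then have "x = s + int (nat (x - s))" "nat (x - s) \<in> {..<nat (t - s + 1)}" by auto
    then show "x \<in> (\<lambda>j. s + int j) ` {..<nat (t - s + 1)}" by (rule image_eqI)
  qed auto
  have inj: "inj_on (\<lambda>j. s + int j) {..<nat (t - s + 1)}" by (auto simp: inj_on_def)
  have "(\<Sum>t'\<in>{s..t}. g (nat (t' - s + 1))) = (\<Sum>j<nat (t - s + 1). g (nat ((s + int j) - s + 1)))"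
    unfolding eqs sum.reindex[OF inj] by (simp only: o_def)
  also have "\<dots> = (\<Sum>j<nat (t - s + 1). g (Suc j))"
    by (intro sum.cong refl arg_cong[where f=g]) (simp add: nat_eq_iff)
  finally show ?thesis .
qed

lemma sum_reindex_down: "(\<Sum>s\<in>{a..t}. g (nat (t - s + 1))) = (\<Sum>j<nat (t - a + 1). g (Suc j))"
proof -
  have eqs: "{a..t} = (\<lambda>j. t - int j) ` {..<nat (t - a + 1)}"
  proof (intro equalityI subsetI)
    fix x assume x: "x \<in> {a..t}"
    then have "x = t - int (nat (t - x))" "nat (t - x) \<in> {..<nat (t - a + 1)}" by auto
    then show "x \<in> (\<lambda>j. t - int j) ` {..<nat (t - a + 1)}" by (rule image_eqI)
  qed auto
  have inj: "inj_on (\<lambda>j. t - int j) {..<nat (t - a + 1)}" by (auto simp: inj_on_def)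
  have "(\<Sum>s\<in>{a..t}. g (nat (t - s + 1))) = (\<Sum>j<nat (t - a + 1). g (nat (t - (t - int j) + 1)))"
    unfolding eqs sum.reindex[OF inj] by (simp only: o_def)
  also have "\<dots> = (\<Sum>j<nat (t - a + 1). g (Suc j))"
    by (intro sum.cong refl arg_cong[where f=g]) (simp add: nat_eq_iff)
  finally show ?thesis .
qed

definition qq :: "real \<Rightarrow> nat \<Rightarrow> real" where "qq p j = (1 - p) ^ (Suc j choose 2)"
definition mu :: "real \<Rightarrow> real" where "mu p = suminf (qq p)"

lemma beta_mu: "beta_tr p = inverse (mu p)"
proof -
  have "qq p = (\<lambda>n. (1 - p) ^ (Suc n choose 2))" by (rule ext) (simp add: qq_def)
  then show ?thesis by (simp add: beta_tr_def mu_def)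
qed

context fixes p :: real assumes p0: "0 < p" and p1: "p < 1"
begin

lemma qq_nonneg: "0 \<le> qq p j" using p1 by (simp add: qq_def)

lemma qq_le: "qq p j \<le> (1 - p) ^ j"
proof -
  have "j \<le> Suc j choose 2"
    by (simp add: numeral_2_eq_2)
  then show ?thesis unfolding qq_def using p0 p1 by (intro power_decreasing) auto
qed

lemma geo_summable: "summable (\<lambda>j. (1 - p) ^ j :: real)"
  using p0 p1 by (intro summable_geometric) auto

lemma qq_summable: "summable (qq p)"
  by (rule summable_comparison_test[OF _ geo_summable]) (use qq_nonneg qq_le in auto)

lemma mu_ge1: "1 \<le> mu p"
proof -
  have "(\<Sum>j<1. qq p j) \<le> suminf (qq p)"
    by (rule sum_le_suminf[OF qq_summable]) (auto simp: qq_nonneg)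
  then show ?thesis by (simp add: mu_def qq_def numeral_2_eq_2)
qed

lemma mu_pos: "0 < mu p" using mu_ge1 by simp

lemma partial_le_mu: "(\<Sum>j<m. qq p j) \<le> mu p"
  unfolding mu_def by (rule sum_le_suminf[OF qq_summable]) (auto simp: qq_nonneg)

lemma tail_le: "mu p - (\<Sum>j<m. qq p j) \<le> (1 - p) ^ m / p"
proof -
  have "mu p - (\<Sum>j<m. qq p j) = (\<Sum>j. qq p (j + m))"
    unfolding mu_def using suminf_minus_initial_segment[OF qq_summable, of m] by simp
  also have "\<dots> \<le> (\<Sum>j. (1 - p) ^ m * (1 - p) ^ j)"
  proof (rule suminf_le)
    show "summable (\<lambda>j. qq p (j + m))" using qq_summable by (rule summable_ignore_initial_segment)
    show "summable (\<lambda>j. (1 - p) ^ m * (1 - p) ^ j)" by (rule summable_mult[OF geo_summable])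
    fix j show "qq p (j + m) \<le> (1 - p) ^ m * (1 - p) ^ j"
      using qq_le[of "j+m"] by (simp add: power_add mult.commute)
  qed
  also have "\<dots> = (1 - p) ^ m * (1 / (1 - (1 - p)))"
    using p0 p1 by (subst suminf_mult) (auto simp: suminf_geometric)
  finally show ?thesis by simp
qed

lemma geo_partial: "(\<Sum>j<n. (1 - p) ^ Suc j) \<le> 1 / p"
proof -
  have "(\<Sum>j<n. (1 - p) ^ Suc j) \<le> (\<Sum>j<n. (1 - p) ^ j)"
    using p0 p1 by (intro sum_mono) (auto intro!: power_decreasing)
  also have "\<dots> \<le> (\<Sum>j. (1 - p) ^ j)"
    by (rule sum_le_suminf[OF geo_summable]) (use p1 in auto)
  also have "\<dots> = 1 / p" using p0 p1 by (subst suminf_geometric) auto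
  finally show ?thesis .
qed

end

declare sum_of_bool_eq[simp del]

context lpp begin

lemma exp_bounds:
  assumes at: "a \<le> t"
  defines "N \<equiv> real (nat (t - a + 1))"
  shows "integrable M (\<lambda>\<omega>. real (mpw (WW \<omega>) a t))"
    and "N / mu p - 1 \<le> (\<integral>\<omega>. real (mpw (WW \<omega>) a t) \<partial>M)"
    and "(\<integral>\<omega>. real (mpw (WW \<omega>) a t) \<partial>M) \<le> (N + 1 / p\<^sup>2) / mu p - 1"
proof -
  define r where "r s = prob {\<omega>\<in>space M. start (WW \<omega>) a s}" for s
  define P where "P s = (\<Sum>j<nat (t - s + 1). qq p j)" for s
  have intS: "integrable M (\<lambda>\<omega>. of_bool (start (WW \<omega>) a s) :: real)" for s
    by (rule int_ofbool(1)[OF start_event])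
  have intB: "integrable M (\<lambda>\<omega>. of_bool (start (WW \<omega>) a s \<and> edgeless (WW \<omega>) s t') :: real)" for s t'
    by (rule int_ofbool(1)[OF both_event])
  have eq1: "real (mpw (WW \<omega>) a t) = (\<Sum>s\<in>{a..t}. of_bool (start (WW \<omega>) a s)) - 1" for \<omega>
    using D1[OF at, of "WW \<omega>"] by simp
  have int1: "integrable M (\<lambda>\<omega>. (\<Sum>s\<in>{a..t}. of_bool (start (WW \<omega>) a s)) - (1::real))"
    using intS by (intro Bochner_Integration.integrable_diff integrable_sum) auto
  show "integrable M (\<lambda>\<omega>. real (mpw (WW \<omega>) a t))"
    unfolding eq1 by (rule int1)
  have E: "(\<integral>\<omega>. real (mpw (WW \<omega>) a t) \<partial>M) = (\<Sum>s\<in>{a..t}. r s) - 1"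
  proof -
    have "(\<integral>\<omega>. real (mpw (WW \<omega>) a t) \<partial>M) = (\<integral>\<omega>. (\<Sum>s\<in>{a..t}. of_bool (start (WW \<omega>) a s)) - (1::real) \<partial>M)"
      unfolding eq1 ..
    also have "\<dots> = (\<integral>\<omega>. (\<Sum>s\<in>{a..t}. of_bool (start (WW \<omega>) a s)) \<partial>M) - (\<integral>\<omega>. 1 \<partial>M)"
      using intS by (intro Bochner_Integration.integral_diff integrable_sum) auto
    also have "(\<integral>\<omega>. (\<Sum>s\<in>{a..t}. of_bool (start (WW \<omega>) a s)) \<partial>M) = (\<Sum>s\<in>{a..t}. (\<integral>\<omega>. (of_bool (start (WW \<omega>) a s) :: real) \<partial>M))"
      by (intro Bochner_Integration.integral_sum) (rule intS)
    also have "\<dots> = (\<Sum>s\<in>{a..t}. r s)"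
      unfolding r_def by (intro sum.cong refl int_ofbool(2)[OF start_event])
    finally show ?thesis by (simp add: prob_space)
  qed
  have Nsum: "N = (\<Sum>s\<in>{a..t}. r s * P s)"
  proof -
    have "N = (\<integral>\<omega>. N \<partial>M)" by (simp add: prob_space)
    also have "\<dots> = (\<integral>\<omega>. (\<Sum>s\<in>{a..t}. \<Sum>t'\<in>{s..t}. of_bool (start (WW \<omega>) a s \<and> edgeless (WW \<omega>) s t')) \<partial>M)"
      unfolding N_def using D2[OF at] by simp
    also have "\<dots> = (\<Sum>s\<in>{a..t}. \<Sum>t'\<in>{s..t}. (\<integral>\<omega>. (of_bool (start (WW \<omega>) a s \<and> edgeless (WW \<omega>) s t') :: real) \<partial>M))"
      using intB by (simp add: Bochner_Integration.integrable_sum Bochner_Integration.integral_sum)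
    also have "\<dots> = (\<Sum>s\<in>{a..t}. \<Sum>t'\<in>{s..t}. r s * (1 - p) ^ (nat (t' - s + 1) choose 2))"
      unfolding r_def by (intro sum.cong refl) (simp add: int_ofbool(2)[OF both_event] prob_both)
    also have "\<dots> = (\<Sum>s\<in>{a..t}. r s * P s)"
    proof (intro sum.cong refl)
      fix s
      have "(\<Sum>t'\<in>{s..t}. r s * (1 - p) ^ (nat (t' - s + 1) choose 2)) = r s * (\<Sum>t'\<in>{s..t}. (\<lambda>m. (1 - p) ^ (m choose 2)) (nat (t' - s + 1)))"
        by (simp add: sum_distrib_left)
      also have "\<dots> = r s * P s"
        unfolding P_def qq_def using sum_reindex_up[of "\<lambda>m. (1 - p) ^ (m choose 2)" s t] by simp
      finally show "(\<Sum>t'\<in>{s..t}. r s * (1 - p) ^ (nat (t' - s + 1) choose 2)) = r s * P s" .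
    qed
    finally show ?thesis .
  qed
  have r01: "0 \<le> r s" "r s \<le> 1" for s unfolding r_def by auto
  have P_le: "P s \<le> mu p" for s unfolding P_def by (rule partial_le_mu[OF p0 p1])
  have P_tail: "mu p - P s \<le> (1 - p) ^ nat (t - s + 1) / p" for s unfolding P_def by (rule tail_le[OF p0 p1])
  have mupos: "0 < mu p" by (rule mu_pos[OF p0 p1])
  have "N \<le> (\<Sum>s\<in>{a..t}. r s * mu p)"
    unfolding Nsum by (intro sum_mono mult_left_mono P_le r01)
  also have "\<dots> = (\<Sum>s\<in>{a..t}. r s) * mu p" by (rule sum_distrib_right[symmetric])
  also have "\<dots> = mu p * ((\<integral>\<omega>. real (mpw (WW \<omega>) a t) \<partial>M) + 1)"
    unfolding E by (simp add: mult.commute)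
  finally have low: "N \<le> mu p * ((\<integral>\<omega>. real (mpw (WW \<omega>) a t) \<partial>M) + 1)" .
  then show "N / mu p - 1 \<le> (\<integral>\<omega>. real (mpw (WW \<omega>) a t) \<partial>M)"
    using mupos by (simp add: field_simps)
  have "mu p * ((\<integral>\<omega>. real (mpw (WW \<omega>) a t) \<partial>M) + 1) - N = (\<Sum>s\<in>{a..t}. r s * (mu p - P s))"
  proof -
    have a1: "(\<Sum>s\<in>{a..t}. r s * (mu p - P s)) = (\<Sum>s\<in>{a..t}. r s * mu p) - (\<Sum>s\<in>{a..t}. r s * P s)"
      by (simp add: right_diff_distrib sum_subtractf)
    have a2: "(\<Sum>s\<in>{a..t}. r s * mu p) = (\<Sum>s\<in>{a..t}. r s) * mu p" by (rule sum_distrib_right[symmetric])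
    show ?thesis unfolding E a1 a2 Nsum by (simp add: mult.commute)
  qed
  also have "\<dots> \<le> (\<Sum>s\<in>{a..t}. (1 - p) ^ nat (t - s + 1) / p)"
  proof (intro sum_mono)
    fix s
    have "r s * (mu p - P s) \<le> 1 * (mu p - P s)"
      using r01[of s] P_le[of s] by (intro mult_right_mono) auto
    then show "r s * (mu p - P s) \<le> (1 - p) ^ nat (t - s + 1) / p" using P_tail[of s] by simp
  qed
  also have "\<dots> = (\<Sum>j<nat (t - a + 1). (1 - p) ^ Suc j / p)"
    by (rule sum_reindex_down[of "\<lambda>m. (1 - p) ^ m / p"])
  also have "\<dots> = (\<Sum>j<nat (t - a + 1). (1 - p) ^ Suc j) / p"
    by (rule sum_divide_distrib[symmetric])
  also have "\<dots> \<le> (1 / p) / p"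
    using geo_partial[OF p0 p1] p0 by (intro divide_right_mono) auto
  finally have "mu p * ((\<integral>\<omega>. real (mpw (WW \<omega>) a t) \<partial>M) + 1) \<le> N + 1 / p\<^sup>2"
    by (simp add: power2_eq_square)
  then show "(\<integral>\<omega>. real (mpw (WW \<omega>) a t) \<partial>M) \<le> (N + 1 / p\<^sup>2) / mu p - 1"
    using mupos by (simp add: field_simps)
qed

end

declare sum_of_bool_eq[simp del]

definition ba :: "nat \<Rightarrow> nat \<Rightarrow> int" where "ba k j = 1 + int (j * k)"

lemma blocks:
  "(\<Sum>j<m. mpw W (ba k j) (ba k (Suc j))) \<le> mpw W 1 (ba k m) \<and>
   mpw W 1 (ba k m) \<le> (\<Sum>j<m. mpw W (ba k j) (ba k (Suc j))) + m"
proof (induction m)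
  case 0 then show ?case by (simp add: ba_def)
next
  case (Suc m)
  have b1: "1 \<le> ba k m" and bc: "ba k m \<le> ba k (Suc m)" by (auto simp: ba_def)
  have "mpw W 1 (ba k m) + mpw W (ba k m) (ba k (Suc m)) \<le> mpw W 1 (ba k (Suc m))"
    by (rule mpw_superadd[OF b1 bc])
  moreover have "mpw W 1 (ba k (Suc m)) \<le> mpw W 1 (ba k m) + mpw W (ba k m) (ba k (Suc m)) + 1"
    by (rule mpw_subadd[OF b1 bc])
  ultimately show ?case using Suc by simp
qed

context lpp begin

definition Z :: "nat \<Rightarrow> nat \<Rightarrow> 'a \<Rightarrow> real" where
  "Z k j \<omega> = real (mpw (WW \<omega>) (ba k j) (ba k (Suc j)))"

lemma mpw_meas: "(\<lambda>\<omega>. real (mpw (WW \<omega>) a b)) \<in> borel_measurable M"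
proof (rule meas_dep[OF finite_Ed Ed_sub])
  fix W W' :: "int \<times> int \<Rightarrow> bool" assume "\<And>e. e \<in> Ed a b \<Longrightarrow> W e = W' e"
  then show "real (mpw W a b) = real (mpw W' a b)" by (simp add: mpw_dep[of a b W W'])
qed simp

lemma Z_meas[measurable]: "Z k j \<in> borel_measurable M"
  unfolding Z_def[abs_def] by (rule mpw_meas)

lemma Z_range: "Z k j \<omega> \<in> {0..real k}"
proof -
  have "mpw (WW \<omega>) (ba k j) (ba k (Suc j)) \<le> nat (ba k (Suc j) - ba k j)"
    by (rule mpw_bound) (simp add: ba_def)
  moreover have "nat (ba k (Suc j) - ba k j) = k" by (simp add: ba_def)
  ultimately show ?thesis by (simp add: Z_def)
qed

lemma Z_indep: "indep_vars (\<lambda>_. borel) (Z k) {..<m}"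
proof -
  let ?K = "\<lambda>j. Ed (ba k j) (ba k (Suc j))"
  have disj: "disjoint_family_on ?K {..<m}"
    unfolding disjoint_family_on_def
  proof (intro ballI impI)
    fix i j assume "i \<in> {..<m}" "j \<in> {..<m}" "i \<noteq> j"
    then have "i < j \<or> j < i" by auto
    then show "?K i \<inter> ?K j = {}"
    proof
      assume "i < j" then have "Suc i * k \<le> j * k" by (intro mult_le_mono1) simp
      then have "ba k (Suc i) \<le> ba k j" unfolding ba_def by (simp only: add_le_cancel_left of_nat_le_iff)
      then show ?thesis by (rule Ed_disj)
    next
      assume "j < i" then have "Suc j * k \<le> i * k" by (intro mult_le_mono1) simp
      then have "ba k (Suc j) \<le> ba k i" unfolding ba_def by (simp only: add_le_cancel_left of_nat_le_iff)
      then show ?thesis using Ed_disj by blast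
    qed
  qed
  have iv: "indep_vars (\<lambda>j. PiM (?K j) (\<lambda>_. count_space UNIV)) (\<lambda>j \<omega>. restrict (\<lambda>i. w i \<omega>) (?K j)) {..<m}"
    by (rule indep_vars_restrict[OF indep _ disj]) (rule Ed_sub)
  have iv2: "indep_vars (\<lambda>_. borel) (\<lambda>j \<omega>. (\<lambda>x. real (mpw x (ba k j) (ba k (Suc j)))) (restrict (\<lambda>i. w i \<omega>) (?K j))) {..<m}"
    by (rule indep_vars_compose2[OF iv]) (rule measurable_PiM_bool_finite[OF finite_Ed], simp)
  have eq: "(\<lambda>x. real (mpw x (ba k j) (ba k (Suc j)))) (restrict (\<lambda>i. w i \<omega>) (?K j)) = Z k j \<omega>" for j \<omega>
    unfolding Z_def by (simp add: mpw_dep[of "ba k j" "ba k (Suc j)" "restrict (\<lambda>i. w i \<omega>) (?K j)" "WW \<omega>"])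
  show ?thesis using iv2 unfolding eq .
qed

lemma hoeff: assumes k: "1 \<le> k"
  shows "prob {\<omega>\<in>space M. \<bar>(\<Sum>j<k^3. Z k j \<omega>) - (\<Sum>j<k^3. expectation (Z k j))\<bar> \<ge> real k ^ 3 * sqrt k}
         \<le> 2 * exp (- 2 * real k ^ 2)"
proof -
  interpret H: Hoeffding_ineq M "{..<k^3}" "Z k" "\<lambda>_. 0" "\<lambda>_. real k" "\<Sum>j<k^3. expectation (Z k j)"
  proof unfold_locales
    show "indep_vars (\<lambda>_. borel) (Z k) {..<k^3}" by (rule Z_indep)
    fix i show "AE x in M. Z k i x \<in> {0..real k}" using Z_range by simp
  qed simp_all
  have S: "(\<Sum>i<k^3. (real k - 0)\<^sup>2) = real k ^ 5" by (simp add: power2_eq_square power_def)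
  have pos: "(\<Sum>i<k^3. (real k - 0)\<^sup>2) > 0" unfolding S using k by simp
  have "prob {\<omega>\<in>space M. \<bar>(\<Sum>j<k^3. Z k j \<omega>) - (\<Sum>j<k^3. expectation (Z k j))\<bar> \<ge> real k ^ 3 * sqrt k}
     \<le> 2 * exp (- 2 * (real k ^ 3 * sqrt k)\<^sup>2 / (\<Sum>i<k^3. (real k - 0)\<^sup>2))"
    by (rule H.Hoeffding_ineq_abs_ge[OF _ pos]) simp
  also have "- 2 * (real k ^ 3 * sqrt k)\<^sup>2 / (\<Sum>i<k^3. (real k - 0)\<^sup>2) = - 2 * real k ^ 2"
  proof -
    have "(real k ^ 3 * sqrt k)\<^sup>2 = real k ^ 7" by (simp add: power_mult_distrib power2_eq_square power_def)
    then show ?thesis unfolding S using k by (simp add: power_def field_simps)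
  qed
  finally show ?thesis .
qed

lemma EZ_bounds: assumes "1 \<le> k"
  shows "(real k + 1) / mu p - 1 \<le> expectation (Z k j)"
    and "expectation (Z k j) \<le> (real k + 1 + 1 / p\<^sup>2) / mu p - 1"
proof -
  have at: "ba k j \<le> ba k (Suc j)" by (simp add: ba_def)
  have N: "real (nat (ba k (Suc j) - ba k j + 1)) = real k + 1" by (simp add: ba_def)
  have e: "expectation (Z k j) = (\<integral>\<omega>. real (mpw (WW \<omega>) (ba k j) (ba k (Suc j))) \<partial>M)"
    unfolding Z_def[abs_def] by (rule refl)
  show "(real k + 1) / mu p - 1 \<le> expectation (Z k j)"
    using exp_bounds(2)[OF at] unfolding e N .
  show "expectation (Z k j) \<le> (real k + 1 + 1 / p\<^sup>2) / mu p - 1"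
    using exp_bounds(3)[OF at] unfolding e N .
qed

lemma SE_bounds: assumes "1 \<le> k"
  shows "real k ^ 3 * ((real k + 1) / mu p - 1) \<le> (\<Sum>j<k^3. expectation (Z k j))"
    and "(\<Sum>j<k^3. expectation (Z k j)) \<le> real k ^ 3 * ((real k + 1 + 1 / p\<^sup>2) / mu p - 1)"
proof -
  have "(\<Sum>j<k^3. (real k + 1) / mu p - 1) \<le> (\<Sum>j<k^3. expectation (Z k j))"
    by (intro sum_mono EZ_bounds(1)[OF assms])
  then show "real k ^ 3 * ((real k + 1) / mu p - 1) \<le> (\<Sum>j<k^3. expectation (Z k j))" by simp
  have "(\<Sum>j<k^3. expectation (Z k j)) \<le> (\<Sum>j<k^3. (real k + 1 + 1 / p\<^sup>2) / mu p - 1)"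
    by (intro sum_mono EZ_bounds(2)[OF assms])
  then show "(\<Sum>j<k^3. expectation (Z k j)) \<le> real k ^ 3 * ((real k + 1 + 1 / p\<^sup>2) / mu p - 1)" by simp
qed

lemma ae_blocks:
  "AE \<omega> in M. eventually (\<lambda>k. \<bar>(\<Sum>j<k^3. Z k j \<omega>) - (\<Sum>j<k^3. expectation (Z k j))\<bar> < real k ^ 3 * sqrt k) sequentially"
proof -
  define A where "A k = {\<omega>\<in>space M. \<bar>(\<Sum>j<k^3. Z k j \<omega>) - (\<Sum>j<k^3. expectation (Z k j))\<bar> \<ge> real k ^ 3 * sqrt k}" for k
  have Aev[measurable]: "A k \<in> sets M" for k unfolding A_def by measurable
  have bnd: "prob (A k) \<le> 2 * exp (-2) ^ k" for k
  proof (cases "k = 0")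
    case True
    have "prob (A k) \<le> 1" by (rule prob_le_1)
    also have "(1::real) \<le> 2 * exp (-2) ^ k" using True by simp
    finally show ?thesis .
  next
    case False
    then have k: "1 \<le> k" by simp
    have "prob (A k) \<le> 2 * exp (- 2 * real k ^ 2)" unfolding A_def by (rule hoeff[OF k])
    also have "\<dots> \<le> 2 * exp (- 2 * real k)"
    proof -
      have "real k \<le> real k ^ 2" using k by (simp add: power2_eq_square)
      then show ?thesis by simp
    qed
    also have "exp (- 2 * real k) = exp (-2) ^ k" by (simp add: exp_of_nat_mult[symmetric] mult.commute)
    finally show ?thesis .
  qed
  have sg: "summable (\<lambda>k. 2 * exp (-2) ^ k :: real)"
    by (intro summable_mult summable_geometric) simp
  have sA: "summable (\<lambda>k. measure M (A k))"
    by (rule summable_comparison_test[OF _ sg]) (use bnd in auto)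
  have "AE \<omega> in M. eventually (\<lambda>k. \<omega> \<in> space M - A k) sequentially"
    by (rule borel_cantelli_AE1) (auto simp: sA less_top[symmetric])
  then show ?thesis
    by (rule AE_mp) (auto simp: A_def elim!: eventually_mono intro!: AE_I2)
qed

end

lemma lim_aux: "(\<lambda>k. ((real k + 1) * c + d + e * sqrt (real k)) / real k) \<longlonglongrightarrow> (c::real)"
proof -
  have 1: "(\<lambda>k. 1 / real k) \<longlonglongrightarrow> (0::real)" by (rule lim_1_over_n)
  have 2: "(\<lambda>k. sqrt (1 / real k)) \<longlonglongrightarrow> 0" using tendsto_real_sqrt[OF 1] by simp
  have "(\<lambda>k. c + (c + d) * (1 / real k) + e * sqrt (1 / real k)) \<longlonglongrightarrow> c + (c + d) * 0 + e * 0"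
    by (intro tendsto_intros 1 2)
  then have 3: "(\<lambda>k. c + (c + d) * (1 / real k) + e * sqrt (1 / real k)) \<longlonglongrightarrow> c" by simp
  have ev: "eventually (\<lambda>k. c + (c + d) * (1 / real k) + e * sqrt (1 / real k) = ((real k + 1) * c + d + e * sqrt (real k)) / real k) sequentially"
  proof (rule eventually_sequentiallyI[of 1])
    fix k :: nat assume "1 \<le> k"
    then have kp: "0 < real k" by simp
    have "sqrt (1 / real k) = sqrt (real k) / real k"
      using kp by (simp add: real_sqrt_divide field_simps)
    then show "c + (c + d) * (1 / real k) + e * sqrt (1 / real k) = ((real k + 1) * c + d + e * sqrt (real k)) / real k"
      using kp by (simp add: field_simps)
  qed
  show ?thesis by (rule Lim_transform_eventually[OF 3 ev])
qed

context lpp begin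

lemma ae_sub: "AE \<omega> in M. (\<lambda>k. real (mpw (WW \<omega>) 1 (ba k (k^3))) / real (k^4)) \<longlonglongrightarrow> 1 / mu p"
  using ae_blocks
proof (rule AE_mp, intro AE_I2 impI)
  fix \<omega> assume ev: "eventually (\<lambda>k. \<bar>(\<Sum>j<k^3. Z k j \<omega>) - (\<Sum>j<k^3. expectation (Z k j))\<bar> < real k ^ 3 * sqrt k) sequentially"
  define c where "c = 1 / mu p"
  define C where "C = 1 / p\<^sup>2"
  have mup: "0 < mu p" by (rule mu_pos[OF p0 p1])
  let ?X = "\<lambda>k. real (mpw (WW \<omega>) 1 (ba k (k^3)))"
  let ?L = "\<lambda>k. ((real k + 1) * c + (-1) + (-1) * sqrt (real k)) / real k"
  let ?U = "\<lambda>k. ((real k + 1) * c + C * c + 1 * sqrt (real k)) / real k"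
  have bounds: "?L k \<le> ?X k / real (k^4) \<and> ?X k / real (k^4) \<le> ?U k"
    if k: "1 \<le> k" and E: "\<bar>(\<Sum>j<k^3. Z k j \<omega>) - (\<Sum>j<k^3. expectation (Z k j))\<bar> < real k ^ 3 * sqrt k" for k
  proof -
    define SZ where "SZ = (\<Sum>j<k^3. Z k j \<omega>)"
    define SE where "SE = (\<Sum>j<k^3. expectation (Z k j))"
    have bl: "SZ \<le> ?X k" "?X k \<le> SZ + real k ^ 3"
    proof -
      have SZ': "SZ = real (\<Sum>j<k^3. mpw (WW \<omega>) (ba k j) (ba k (Suc j)))"
        unfolding SZ_def Z_def by simp
      show "SZ \<le> ?X k" unfolding SZ' using blocks[where m="k^3" and W="WW \<omega>" and k=k] by (simp only: of_nat_le_iff)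
      have "mpw (WW \<omega>) 1 (ba k (k^3)) \<le> (\<Sum>j<k^3. mpw (WW \<omega>) (ba k j) (ba k (Suc j))) + k^3"
        using blocks[where m="k^3" and W="WW \<omega>" and k=k] by blast
      then have "?X k \<le> real ((\<Sum>j<k^3. mpw (WW \<omega>) (ba k j) (ba k (Suc j))) + k^3)" by (simp only: of_nat_le_iff)
      then show "?X k \<le> SZ + real k ^ 3" unfolding SZ' by simp
    qed
    have se: "real k ^ 3 * ((real k + 1) * c - 1) \<le> SE" "SE \<le> real k ^ 3 * ((real k + 1) * c + C * c - 1)"
    proof -
      have eqA: "(real k + 1) * c - 1 = (real k + 1) / mu p - 1" by (simp add: c_def)
      have eqB: "(real k + 1) * c + C * c - 1 = (real k + 1 + 1 / p\<^sup>2) / mu p - 1"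
        by (simp add: c_def C_def add_divide_distrib)
      show "real k ^ 3 * ((real k + 1) * c - 1) \<le> SE" unfolding eqA SE_def by (rule SE_bounds(1)[OF k])
      show "SE \<le> real k ^ 3 * ((real k + 1) * c + C * c - 1)" unfolding eqB SE_def by (rule SE_bounds(2)[OF k])
    qed
    have E': "\<bar>SZ - SE\<bar> < real k ^ 3 * sqrt k" using E unfolding SZ_def SE_def .
    have k3: "0 < real k ^ 3" using k by simp
    have kp: "0 < real k" using k by simp
    have low: "real k ^ 3 * ((real k + 1) * c + (-1) + (-1) * sqrt (real k)) \<le> ?X k"
      using bl se E' by (simp add: algebra_simps)
    have up: "?X k \<le> real k ^ 3 * ((real k + 1) * c + C * c + 1 * sqrt (real k))"
      using bl se E' by (simp add: algebra_simps)
    have k4: "real (k^4) = real k ^ 3 * real k" by (simp add: power_def)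
    have "?L k = (real k ^ 3 * ((real k + 1) * c + (-1) + (-1) * sqrt (real k))) / real (k^4)"
      unfolding k4 using k3 kp by (simp add: field_simps)
    also have "\<dots> \<le> ?X k / real (k^4)" using low k by (intro divide_right_mono) auto
    finally have l: "?L k \<le> ?X k / real (k^4)" .
    have "?X k / real (k^4) \<le> (real k ^ 3 * ((real k + 1) * c + C * c + 1 * sqrt (real k))) / real (k^4)"
      using up k by (intro divide_right_mono) auto
    also have "\<dots> = ?U k" unfolding k4 using k3 kp by (simp add: field_simps)
    finally show ?thesis using l by simp
  qed
  have ev2: "eventually (\<lambda>k. ?L k \<le> ?X k / real (k^4) \<and> ?X k / real (k^4) \<le> ?U k) sequentially"
    using ev eventually_ge_at_top[of 1] by eventually_elim (rule bounds)
  show "(\<lambda>k. ?X k / real (k^4)) \<longlonglongrightarrow> 1 / mu p"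
    unfolding c_def[symmetric]
    by (rule tendsto_sandwich[OF eventually_mono[OF ev2] eventually_mono[OF ev2] lim_aux[of c "-1" "-1"] lim_aux[of c "C*c" 1]])
       (erule conjunct1, erule conjunct2)
qed

end

lemma le_pow4: "k \<le> (k::nat) ^ 4"
  by (cases k) (auto intro: self_le_power)

lemma ratio_lim1: "(\<lambda>k. real (k^4) / real ((k+1)^4)) \<longlonglongrightarrow> 1"
proof -
  have "(\<lambda>k. (real k / real (Suc k)) ^ 4) \<longlonglongrightarrow> 1 ^ 4"
    by (intro tendsto_power LIMSEQ_n_over_Suc_n)
  then show ?thesis by (simp add: power_divide)
qed

lemma ratio_lim2: "(\<lambda>k. real ((k+1)^4) / real (k^4)) \<longlonglongrightarrow> 1"
proof -
  have "(\<lambda>k. (real (Suc k) / real k) ^ 4) \<longlonglongrightarrow> 1 ^ 4"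
    by (intro tendsto_power LIMSEQ_Suc_n_over_n)
  then show ?thesis by (simp add: power_divide)
qed

lemma interp:
  fixes x :: "nat \<Rightarrow> real"
  assumes mono: "\<And>m n. 1 \<le> m \<Longrightarrow> m \<le> n \<Longrightarrow> x m \<le> x n" and nonneg: "\<And>n. 1 \<le> n \<Longrightarrow> 0 \<le> x n"
    and lim: "(\<lambda>k. x (Suc (k^4)) / real (k^4)) \<longlonglongrightarrow> c"
  shows "(\<lambda>n. x n / (real n - 1)) \<longlonglongrightarrow> c"
proof -
  define S where "S n = {k::nat. k^4 \<le> n - 1}" for n
  define \<kappa> where "\<kappa> n = Max (S n)" for n
  have finS: "finite (S n)" for n
    by (rule finite_subset[of _ "{..n}"]) (auto simp: S_def intro: order_trans[OF le_pow4])
  have in0: "0 \<in> S n" for n by (simp add: S_def)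
  have k4: "\<kappa> n ^ 4 \<le> n - 1" for n
    using Max_in[OF finS, of n] in0 unfolding \<kappa>_def S_def by blast
  have k4': "n - 1 < (\<kappa> n + 1) ^ 4" for n
  proof (rule ccontr)
    assume "\<not> n - 1 < (\<kappa> n + 1) ^ 4"
    then have "\<kappa> n + 1 \<in> S n" by (simp add: S_def)
    then have "\<kappa> n + 1 \<le> \<kappa> n" unfolding \<kappa>_def by (rule Max_ge[OF finS])
    then show False by simp
  qed
  have kge: "K \<le> \<kappa> n" if "K^4 \<le> n - 1" for K n
    unfolding \<kappa>_def by (rule Max_ge[OF finS]) (use that in \<open>simp add: S_def\<close>)
  have klim: "filterlim \<kappa> at_top sequentially"
    unfolding filterlim_at_top
  proof
    fix K :: nat
    show "eventually (\<lambda>n. K \<le> \<kappa> n) sequentially"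
      by (rule eventually_sequentiallyI[of "Suc (K^4)"], rule kge) linarith
  qed
  define g1 where "g1 k = (x (Suc (k^4)) / real (k^4)) * (real (k^4) / real ((k+1)^4))" for k
  define g2 where "g2 k = (x (Suc ((k+1)^4)) / real ((k+1)^4)) * (real ((k+1)^4) / real (k^4))" for k
  have g1lim: "g1 \<longlonglongrightarrow> c * 1" unfolding g1_def[abs_def] by (intro tendsto_mult lim ratio_lim1)
  have lim': "(\<lambda>k. x (Suc ((k+1)^4)) / real ((k+1)^4)) \<longlonglongrightarrow> c"
    using LIMSEQ_Suc[OF lim] by simp
  have g2lim: "g2 \<longlonglongrightarrow> c * 1" unfolding g2_def[abs_def] by (intro tendsto_mult lim' ratio_lim2)
  have L1: "(\<lambda>n. g1 (\<kappa> n)) \<longlonglongrightarrow> c" using filterlim_compose[OF g1lim klim] by simp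
  have L2: "(\<lambda>n. g2 (\<kappa> n)) \<longlonglongrightarrow> c" using filterlim_compose[OF g2lim klim] by simp
  have bnds: "g1 (\<kappa> n) \<le> x n / (real n - 1) \<and> x n / (real n - 1) \<le> g2 (\<kappa> n)" if n: "2 \<le> n" for n
  proof -
    define K where "K = \<kappa> n"
    have K1: "1 \<le> K" unfolding K_def by (rule kge) (use n in simp)
    have A: "K^4 \<le> n - 1" and B: "n - 1 < (K+1)^4" unfolding K_def by (rule k4, rule k4')
    have Apos: "0 < real (K^4)" using K1 by simp
    have Bpos: "0 < real ((K+1)^4)" by simp
    have nr: "real n - 1 = real (n - 1)" using n by simp
    have npos: "0 < real n - 1" using n by simp
    have g1e: "g1 K = x (Suc (K^4)) / real ((K+1)^4)" unfolding g1_def using Apos by simp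
    have g2e: "g2 K = x (Suc ((K+1)^4)) / real (K^4)" unfolding g2_def using Bpos by simp
    have x1: "x (Suc (K^4)) \<le> x n" by (rule mono) (use A n in auto)
    have x2: "x n \<le> x (Suc ((K+1)^4))" by (rule mono) (use B n in auto)
    have xn0: "0 \<le> x n" using n by (intro nonneg) simp
    have xB0: "0 \<le> x (Suc ((K+1)^4))" by (intro nonneg) simp
    have "g1 K \<le> x n / real ((K+1)^4)" unfolding g1e using x1 Bpos by (intro divide_right_mono) auto
    also have "\<dots> \<le> x n / (real n - 1)"
    proof -
      have Bn: "real (n - 1) \<le> real ((K+1)^4)" using B by (simp only: of_nat_le_iff)
      show ?thesis using xn0 npos Bn Bpos unfolding nr by (intro divide_left_mono) auto
    qed
    finally have lo: "g1 K \<le> x n / (real n - 1)" .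
    have "x n / (real n - 1) \<le> x (Suc ((K+1)^4)) / (real n - 1)" using x2 npos by (intro divide_right_mono) auto
    also have "\<dots> \<le> x (Suc ((K+1)^4)) / real (K^4)"
    proof -
      have An: "real (K^4) \<le> real (n - 1)" using A by (simp only: of_nat_le_iff)
      show ?thesis using xB0 Apos An npos unfolding nr by (intro divide_left_mono) auto
    qed
    finally show ?thesis using lo g2e unfolding K_def by simp
  qed
  show ?thesis
    by (rule tendsto_sandwich[OF eventually_mono[OF eventually_ge_at_top[of 2]] eventually_mono[OF eventually_ge_at_top[of 2]] L1 L2])
       (use bnds in blast)+
qed

lemma lim2: "(\<lambda>n. ((real n + d) * c + e) / (real n - 1)) \<longlonglongrightarrow> (c::real)"
proof -
  have "(\<lambda>n. ((real (Suc n) + d) * c + e) / (real (Suc n) - 1)) \<longlonglongrightarrow> c"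
  proof -
    have 1: "(\<lambda>k. 1 / real k) \<longlonglongrightarrow> (0::real)" by (rule lim_1_over_n)
    have "(\<lambda>n. c + (c + d * c + e) * (1 / real n)) \<longlonglongrightarrow> c + (c + d * c + e) * 0"
      by (intro tendsto_intros 1)
    then have 3: "(\<lambda>n. c + (c + d * c + e) * (1 / real n)) \<longlonglongrightarrow> c" by simp
    have ev: "eventually (\<lambda>n. c + (c + d * c + e) * (1 / real n) = ((real (Suc n) + d) * c + e) / (real (Suc n) - 1)) sequentially"
    proof (rule eventually_sequentiallyI[of 1])
      fix n :: nat assume "1 \<le> n"
      then have "0 < real n" by simp
      then show "c + (c + d * c + e) * (1 / real n) = ((real (Suc n) + d) * c + e) / (real (Suc n) - 1)"
        by (simp add: field_simps)
    qed
    show ?thesis by (rule Lim_transform_eventually[OF 3 ev])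
  qed
  then show ?thesis by (rule LIMSEQ_imp_Suc)
qed

lemma inc_paths_1_0: "inc_paths 1 0 = {}"
proof -
  have False if "xs \<in> inc_paths 1 0" for xs
  proof -
    have "set xs \<subseteq> {1..0}" by (rule inc_paths_set(1)[OF that])
    moreover have "xs \<noteq> []" using that by (simp add: inc_paths_def)
    ultimately show False by auto
  qed
  then show ?thesis by blast
qed

theorem theorem5:
  fixes M :: "'a measure" and w :: "int \<times> int \<Rightarrow> 'a \<Rightarrow> bool" and p :: real
    and X :: "nat \<Rightarrow> 'a \<Rightarrow> real"
  assumes "prob_space M"
    and "0 < p" and "p < 1"
    and "prob_space.indep_vars M (\<lambda>_. count_space UNIV) w {e. fst e < snd e}"
    and "\<And>e. fst e < snd e \<Longrightarrow> distr M (count_space UNIV) (w e) = measure_pmf (bernoulli_pmf p)"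
    and "\<And>n \<omega>. X n \<omega> = real (max_path_weight (\<lambda>e. w e \<omega>) 1 (int n))"
  shows "(AE \<omega> in M. (\<lambda>n. X n \<omega> / (real n - 1)) \<longlonglongrightarrow> beta_tr p)
    \<and> (\<forall>n\<ge>1. integrable M (\<lambda>\<omega>. max (X n \<omega>) 0))
    \<and> (\<lambda>n. \<integral>\<omega>. \<bar>max (X n \<omega>) 0 / (real n - 1) - beta_tr p\<bar> \<partial>M) \<longlonglongrightarrow> 0
    \<and> (\<lambda>n. (\<integral>\<omega>. X n \<omega> \<partial>M) / (real n - 1)) \<longlonglongrightarrow> beta_tr p"
proof -
  interpret lpp M w p by (rule lpp.intro[OF assms(1) lpp_axioms.intro[OF assms(2-5)]])
  have Xeq: "X n \<omega> = real (mpw (WW \<omega>) 1 (int n))" for n \<omega> by (rule assms(6))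
  have X0: "0 \<le> X n \<omega>" for n \<omega> unfolding Xeq by simp
  have mx: "max (X n \<omega>) 0 = X n \<omega>" for n \<omega> using X0[of n \<omega>] by simp
  have beta: "beta_tr p = 1 / mu p" by (simp add: beta_mu divide_inverse)
  have mup: "0 < mu p" by (rule mu_pos[OF p0 p1])
  have Xmeas[measurable]: "X n \<in> borel_measurable M" for n
    unfolding Xeq[abs_def] by (rule mpw_meas)
  have AEc: "AE \<omega> in M. (\<lambda>n. X n \<omega> / (real n - 1)) \<longlonglongrightarrow> beta_tr p"
    using ae_sub
  proof (rule AE_mp, intro AE_I2 impI)
    fix \<omega> assume lim: "(\<lambda>k. real (mpw (WW \<omega>) 1 (ba k (k^3))) / real (k^4)) \<longlonglongrightarrow> 1 / mu p"
    have bk: "ba k (k^3) = int (Suc (k^4))" for k by (simp add: ba_def power_def)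
    have lim': "(\<lambda>k. X (Suc (k^4)) \<omega> / real (k^4)) \<longlonglongrightarrow> 1 / mu p"
      using lim unfolding bk Xeq .
    have "(\<lambda>n. X n \<omega> / (real n - 1)) \<longlonglongrightarrow> 1 / mu p"
    proof (rule interp[OF _ _ lim'])
      fix m n :: nat assume "1 \<le> m" "m \<le> n"
      then show "X m \<omega> \<le> X n \<omega>" unfolding Xeq by (simp add: mpw_mono)
    qed (rule X0)
    then show "(\<lambda>n. X n \<omega> / (real n - 1)) \<longlonglongrightarrow> beta_tr p" unfolding beta .
  qed
  have intX: "integrable M (X n)" if "1 \<le> n" for n
  proof -
    have "1 \<le> int n" using that by simp
    then have "integrable M (\<lambda>\<omega>. real (mpw (WW \<omega>) 1 (int n)))" by (rule exp_bounds(1))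
    then show ?thesis unfolding Xeq[abs_def] .
  qed
  have part2: "\<forall>n\<ge>1. integrable M (\<lambda>\<omega>. max (X n \<omega>) 0)"
    unfolding mx using intX by blast
  have part4: "(\<lambda>n. (\<integral>\<omega>. X n \<omega> \<partial>M) / (real n - 1)) \<longlonglongrightarrow> beta_tr p"
  proof -
    define c where "c = 1 / mu p"
    have bnd: "((real n + 0) * c + (-1)) / (real n - 1) \<le> (\<integral>\<omega>. X n \<omega> \<partial>M) / (real n - 1) \<and>
               (\<integral>\<omega>. X n \<omega> \<partial>M) / (real n - 1) \<le> ((real n + 1 / p\<^sup>2) * c + (-1)) / (real n - 1)"
      if n: "2 \<le> n" for n
    proof -
      have a: "1 \<le> int n" using n by simp
      have N: "real (nat (int n - 1 + 1)) = real n" by simp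
      have e: "(\<integral>\<omega>. X n \<omega> \<partial>M) = (\<integral>\<omega>. real (mpw (WW \<omega>) 1 (int n)) \<partial>M)" unfolding Xeq ..
      have l: "real n / mu p - 1 \<le> (\<integral>\<omega>. X n \<omega> \<partial>M)" using exp_bounds(2)[OF a] unfolding N e .
      have u: "(\<integral>\<omega>. X n \<omega> \<partial>M) \<le> (real n + 1 / p\<^sup>2) / mu p - 1" using exp_bounds(3)[OF a] unfolding N e .
      have np: "0 < real n - 1" using n by simp
      have l': "(real n + 0) * c + (-1) \<le> (\<integral>\<omega>. X n \<omega> \<partial>M)" using l by (simp add: c_def)
      have u': "(\<integral>\<omega>. X n \<omega> \<partial>M) \<le> (real n + 1 / p\<^sup>2) * c + (-1)" using u by (simp add: c_def)
      show ?thesis using l' u' np by (auto intro: divide_right_mono)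
    qed
    show ?thesis unfolding beta c_def[symmetric]
      by (rule tendsto_sandwich[OF eventually_mono[OF eventually_ge_at_top[of 2]] eventually_mono[OF eventually_ge_at_top[of 2]] lim2 lim2])
         (use bnd in blast)+
  qed
  have part3: "(\<lambda>n. \<integral>\<omega>. \<bar>max (X n \<omega>) 0 / (real n - 1) - beta_tr p\<bar> \<partial>M) \<longlonglongrightarrow> 0"
  proof -
    define c0 where "c0 = real (Max ({} :: nat set))"
    define B where "B = c0 + 1 + \<bar>beta_tr p\<bar>"
    have c0n: "0 \<le> c0" by (simp add: c0_def)
    have X0e: "X 0 \<omega> = c0" for \<omega> unfolding Xeq c0_def max_path_weight_def by (simp add: inc_paths_1_0)
    have bound: "\<bar>max (X n \<omega>) 0 / (real n - 1) - beta_tr p\<bar> \<le> B" for n \<omega>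
    proof -
      consider "n = 0" | "n = 1" | "2 \<le> n" by linarith
      then show ?thesis
      proof cases
        case 1 then show ?thesis unfolding mx B_def using X0e[of \<omega>] c0n by simp
      next
        case 2 then show ?thesis unfolding B_def using c0n by simp
      next
        case 3
        have "mpw (WW \<omega>) 1 (int n) \<le> nat (int n - 1)" using 3 by (intro mpw_bound) simp
        then have "X n \<omega> \<le> real n - 1" unfolding Xeq using 3 by (simp add: of_nat_diff nat_diff_distrib)
        moreover have "0 < real n - 1" using 3 by simp
        ultimately have "X n \<omega> / (real n - 1) \<le> 1" "0 \<le> X n \<omega> / (real n - 1)" using X0[of n \<omega>] by auto
        then show ?thesis unfolding mx B_def using c0n by linarith
      qed
    qed
    have "(\<lambda>n. \<integral>\<omega>. \<bar>max (X n \<omega>) 0 / (real n - 1) - beta_tr p\<bar> \<partial>M) \<longlonglongrightarrow> (\<integral>\<omega>. 0 \<partial>M)"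
    proof (rule integral_dominated_convergence[where w="\<lambda>_. B"])
      show "(\<lambda>\<omega>. 0::real) \<in> borel_measurable M" by simp
      fix n show "(\<lambda>\<omega>. \<bar>max (X n \<omega>) 0 / (real n - 1) - beta_tr p\<bar>) \<in> borel_measurable M" by measurable
    next
      show "integrable M (\<lambda>_. B)" by simp
      show "AE \<omega> in M. (\<lambda>n. \<bar>max (X n \<omega>) 0 / (real n - 1) - beta_tr p\<bar>) \<longlonglongrightarrow> 0"
        using AEc
      proof (rule AE_mp, intro AE_I2 impI)
        fix \<omega> assume "(\<lambda>n. X n \<omega> / (real n - 1)) \<longlonglongrightarrow> beta_tr p"
        then have "(\<lambda>n. \<bar>X n \<omega> / (real n - 1) - beta_tr p\<bar>) \<longlonglongrightarrow> \<bar>beta_tr p - beta_tr p\<bar>"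
          by (intro tendsto_intros)
        then show "(\<lambda>n. \<bar>max (X n \<omega>) 0 / (real n - 1) - beta_tr p\<bar>) \<longlonglongrightarrow> 0" unfolding mx by simp
      qed
      fix n show "AE \<omega> in M. norm (\<bar>max (X n \<omega>) 0 / (real n - 1) - beta_tr p\<bar>) \<le> B"
        using bound by simp
    qed
    then show ?thesis by simp
  qed
  show ?thesis using AEc part2 part3 part4 by blast
qed

end
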